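(* Let $G$ be a tournament with matching ordering $v_1,\ldots,v_n$, and let $X=\{1,\ldots,n\}$. Suppose $\sigma\in S_n$ is such that $v_{\sigma(1)},\ldots,v_{\sigma(n)}$ is also a matching ordering of $G$. Then: (a) if $\sigma=\sigma_X$, then $G$ is either transitive or isomorphic to $P_n$, and the ordering $v_1,\ldots,v_n$ is $\pi_2 G$; (b) if $\sigma=\sigma_X^{-1}$, then $G$ is either transitive or isomorphic to $P_n$, and the ordering $v_1,\ldots,v_n$ is $\pi_1 G$; (c) if $n=4$ and $\sigma=\tau_X$, then $G$ is isomorphic to $P_4$, and the ordering $v_1,\ldots,v_4$ is either $\pi_2 G$ or $\pi_2\pi_1 G$.
   Context: A tournament is a finite, non-null, loopless directed graph in which for any two distinct vertices $u,v$ there is exactly one edge with both ends in $\{u,v\}$; write $u\to v$ for the edge from $u$ to $v$. Given an ordering $v_1,\dots,v_n$ of the vertices, a backedge is an edge $v_j\to v_i$ with $j>i$; the ordering is a matching ordering if every vertex is the head or tail of at most one backedge. A tournament is transitive if it has an ordering $u_1,\dots,u_n$ with $u_i\to u_j$ for all $i<j$ (its standard ordering). $P_n$ is the tournament on $u_1,\dots,u_n$ with $u_i\to u_j$ if $j-i\ge2$ and $u_{i+1}\to u_i$ for $1\le i\le n-1$; for $n\ne3$ this defining ordering is unique. For $X=\{b,\dots,a\}$: if $|X|$ is odd, $\sigma_X=(b\ b{+}2\ \cdots\ a{-}2\ a\ a{-}1\ a{-}3\ \cdots\ b{+}1)$; if $|X|$ is even, $\sigma_X=(b\ b{+}2\ \cdots\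 a{-}1\ a\ a{-}2\ \cdots\ b{+}1)$ (identity if $|X|=1$, the transposition $(b\ a)$ if $|X|=2$); if $|X|=4$, $\tau_X=(b\ b{+}2)(b{+}1\ b{+}3)$. For a tournament $G$ on $n$ vertices that is transitive or isomorphic to $P_n$, let $u_1,\dots,u_n$ be its standard ordering (if transitive) or its defining $P_n$ ordering (for $P_3$: some defining ordering); then $\pi_1G$ is the ordering obtained from $u_1,\dots,u_n$ by swapping $u_{2j-1}$ and $u_{2j}$ for every $j$ with $2j\le n$, i.e. $u_2,u_1,u_4,u_3,\dots$; $\pi_2G$ is obtained by swapping $u_{2j}$ and $u_{2j+1}$ for every $j\ge1$ with $2j+1\le n$, i.e. $u_1,u_3,u_2,u_5,u_4,\dots$; and for $G\cong P_4$, $\pi_2\pi_1G$ is the ordering $u_2,u_4,u_1,u_3$. If $n=2$, any ordering counts as $\pi_1G$ and $\pi_2G$. *)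

theory Defs
  imports "HOL-Combinatorics.Combinatorics"
begin

definition tournament :: "'a set \<Rightarrow> ('a \<Rightarrow> 'a \<Rightarrow> bool) \<Rightarrow> bool" where
  "tournament V E \<longleftrightarrow> finite V \<and> V \<noteq> {} \<and> (\<forall>u\<in>V. \<not> E u u) \<and>
     (\<forall>u\<in>V. \<forall>w\<in>V. u \<noteq> w \<longrightarrow> (E u w \<longleftrightarrow> \<not> E w u))"

definition is_ordering :: "'a set \<Rightarrow> nat \<Rightarrow> (nat \<Rightarrow> 'a) \<Rightarrow> bool" where
  "is_ordering V n v \<longleftrightarrow> bij_betw v {1..n} V"

definition backedge :: "('a \<Rightarrow> 'a \<Rightarrow> bool) \<Rightarrow> (nat \<Rightarrow> 'a) \<Rightarrow> nat \<Rightarrow> nat \<Rightarrow> bool" where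
  "backedge E v i j \<longleftrightarrow> i < j \<and> E (v j) (v i)"

definition matching_ordering :: "'a set \<Rightarrow> ('a \<Rightarrow> 'a \<Rightarrow> bool) \<Rightarrow> nat \<Rightarrow> (nat \<Rightarrow> 'a) \<Rightarrow> bool" where
  "matching_ordering V E n v \<longleftrightarrow> is_ordering V n v \<and>
     (\<forall>i\<in>{1..n}. card {j\<in>{1..n}. backedge E v i j \<or> backedge E v j i} \<le> 1)"

definition transitive_ordering :: "'a set \<Rightarrow> ('a \<Rightarrow> 'a \<Rightarrow> bool) \<Rightarrow> nat \<Rightarrow> (nat \<Rightarrow> 'a) \<Rightarrow> bool" where
  "transitive_ordering V E n u \<longleftrightarrow> is_ordering V n u \<and>
     (\<forall>i\<in>{1..n}. \<forall>j\<in>{1..n}. i < j \<longrightarrow> E (u i) (u j))"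

definition transitive_tournament :: "'a set \<Rightarrow> ('a \<Rightarrow> 'a \<Rightarrow> bool) \<Rightarrow> bool" where
  "transitive_tournament V E \<longleftrightarrow> tournament V E \<and> (\<exists>u. transitive_ordering V E (card V) u)"

definition Pn_ordering :: "'a set \<Rightarrow> ('a \<Rightarrow> 'a \<Rightarrow> bool) \<Rightarrow> nat \<Rightarrow> (nat \<Rightarrow> 'a) \<Rightarrow> bool" where
  "Pn_ordering V E n u \<longleftrightarrow> is_ordering V n u \<and>
     (\<forall>i\<in>{1..n}. \<forall>j\<in>{1..n}. (i + 2 \<le> j \<longrightarrow> E (u i) (u j)) \<and> (j = i + 1 \<longrightarrow> E (u j) (u i)))"

definition iso_Pn :: "'a set \<Rightarrow> ('a \<Rightarrow> 'a \<Rightarrow> bool) \<Rightarrow> nat \<Rightarrow> bool" where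
  "iso_Pn V E n \<longleftrightarrow> tournament V E \<and> (\<exists>u. Pn_ordering V E n u)"

definition pi1 :: "nat \<Rightarrow> nat \<Rightarrow> nat" where
  "pi1 n i = (if odd i \<and> i + 1 \<le> n then i + 1 else if even i \<and> i \<ge> 2 \<and> i \<le> n then i - 1 else i)"

definition pi2 :: "nat \<Rightarrow> nat \<Rightarrow> nat" where
  "pi2 n i = (if even i \<and> i \<ge> 2 \<and> i + 1 \<le> n then i + 1 else if odd i \<and> i \<ge> 3 \<and> i \<le> n then i - 1 else i)"

(* v is the ordering obtained from the standard ordering (transitive case) or a defining P_n ordering u
   by the position permutation p: v_i = u_(p i) *)
definition is_pi_ordering :: "'a set \<Rightarrow> ('a \<Rightarrow> 'a \<Rightarrow> bool) \<Rightarrow> nat \<Rightarrow> (nat \<Rightarrow> nat) \<Rightarrow> (nat \<Rightarrow> 'a) \<Rightarrow> bool" where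
  "is_pi_ordering V E n p v \<longleftrightarrow>
     (\<exists>u. (transitive_ordering V E n u \<or> Pn_ordering V E n u) \<and> (\<forall>i\<in>{1..n}. v i = u (p i)))"

definition is_pi2pi1_P4_ordering :: "'a set \<Rightarrow> ('a \<Rightarrow> 'a \<Rightarrow> bool) \<Rightarrow> (nat \<Rightarrow> 'a) \<Rightarrow> bool" where
  "is_pi2pi1_P4_ordering V E v \<longleftrightarrow>
     (\<exists>u. Pn_ordering V E 4 u \<and> v 1 = u 2 \<and> v 2 = u 4 \<and> v 3 = u 1 \<and> v 4 = u 3)"

definition sigmaX :: "nat \<Rightarrow> nat \<Rightarrow> nat" where
  "sigmaX n = cycle_of_list (filter odd [1..<Suc n] @ rev (filter even [1..<Suc n]))"

definition tauX :: "nat \<Rightarrow> nat" where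
  "tauX = transpose 1 3 \<circ> transpose 2 4"

end

theory Submission
  imports Defs
begin


lemma pi1_inv[simp]: "pi1 n (pi1 n i) = i"
  unfolding pi1_def by (auto split: if_splits; presburger)
lemma pi2_inv[simp]: "pi2 n (pi2 n i) = i"
  unfolding pi2_def by (auto split: if_splits; presburger)
lemma pi1_range: "i \<in> {1..n} \<Longrightarrow> pi1 n i \<in> {1..n}"
  unfolding pi1_def by (auto split: if_splits; presburger)
lemma pi2_range: "i \<in> {1..n} \<Longrightarrow> pi2 n i \<in> {1..n}"
  unfolding pi2_def by (auto split: if_splits; presburger)
lemma pi1_out: "i \<notin> {1..n} \<Longrightarrow> pi1 n i = i"
  unfolding pi1_def by (auto split: if_splits; presburger)
lemma pi2_out: "i \<notin> {1..n} \<Longrightarrow> pi2 n i = i"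
  unfolding pi2_def by (auto split: if_splits; presburger)

lemma inv_bij_betw: "(\<And>i. f (f i) = i) \<Longrightarrow> (\<And>i. i \<in> S \<Longrightarrow> f i \<in> S) \<Longrightarrow> bij_betw f S S"
  by (rule bij_betw_byWitness[where f'=f]) auto

lemma pi1_perm: "pi1 n permutes {1..n}"
  by (rule bij_imp_permutes[OF inv_bij_betw[OF pi1_inv pi1_range]]) (auto intro: pi1_out)
lemma pi2_perm: "pi2 n permutes {1..n}"
  by (rule bij_imp_permutes[OF inv_bij_betw[OF pi2_inv pi2_range]]) (auto intro: pi2_out)

lemma pi1_mono: "1 \<le> k \<Longrightarrow> l \<le> n \<Longrightarrow> k + 2 \<le> l \<Longrightarrow> pi1 n k < pi1 n l"
  unfolding pi1_def by (auto split: if_splits; presburger)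
lemma pi2_mono: "1 \<le> k \<Longrightarrow> l \<le> n \<Longrightarrow> k + 2 \<le> l \<Longrightarrow> pi2 n k < pi2 n l"
  unfolding pi2_def by (auto split: if_splits; presburger)
lemma pi1_adj: "1 \<le> k \<Longrightarrow> k + 1 \<le> n \<Longrightarrow> pi1 n k < pi1 n (k+1) \<longleftrightarrow> \<not> (odd k \<longleftrightarrow> True)"
  unfolding pi1_def by (auto split: if_splits; presburger)
lemma pi2_adj: "1 \<le> k \<Longrightarrow> k + 1 \<le> n \<Longrightarrow> pi2 n k < pi2 n (k+1) \<longleftrightarrow> (odd k \<longleftrightarrow> True)"
  unfolding pi2_def by (auto split: if_splits; presburger)

lemma odds: "filter odd [1..<Suc n] = map (\<lambda>k. 2*k+1) [0..<(n+1) div 2]"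
proof (induction n)
  case (Suc n)
  show ?case
  proof (cases "odd (Suc n)")
    case True
    then have "(Suc n + 1) div 2 = Suc ((n+1) div 2)" by presburger
    moreover have "2 * ((n+1) div 2) + 1 = Suc n" using True by presburger
    ultimately show ?thesis using Suc True by simp
  next
    case False
    then have "(Suc n + 1) div 2 = (n+1) div 2" by presburger
    then show ?thesis using Suc False by simp
  qed
qed simp

lemma evens: "filter even [1..<Suc n] = map (\<lambda>k. 2*k+2) [0..<n div 2]"
proof (induction n)
  case (Suc n)
  show ?case
  proof (cases "even (Suc n)")
    case True
    then have "Suc n div 2 = Suc (n div 2)" by presburger
    moreover have "2 * (n div 2) + 2 = Suc n" using True by presburger
    ultimately show ?thesis using Suc True by simp
  next
    case False
    then have "Suc n div 2 = n div 2" by presburger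
    then show ?thesis using Suc False by simp
  qed
qed simp

definition LL :: "nat \<Rightarrow> nat list" where
  "LL n = filter odd [1..<Suc n] @ rev (filter even [1..<Suc n])"

lemma LL_len: "length (LL n) = n"
  unfolding LL_def odds evens by simp

lemma LL_nth: "i < n \<Longrightarrow> LL n ! i = (if i < (n+1) div 2 then 2*i+1 else 2*(n div 2 - (i - (n+1) div 2)))"
  unfolding LL_def odds evens by (auto simp: nth_append rev_nth)

lemma LL_distinct: "distinct (LL n)"
  unfolding LL_def by auto

lemma sigma_nth: "i < n \<Longrightarrow> sigmaX n (LL n ! i) = LL n ! (Suc i mod n)"
proof -
  assume i: "i < n"
  have "map (cycle_of_list (LL n)) (LL n) = rotate1 (LL n)"
    using cyclic_rotation[OF LL_distinct, of 1 n] by simp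
  then have "cycle_of_list (LL n) (LL n ! i) = rotate1 (LL n) ! i"
    by (metis LL_len i nth_map)
  then show ?thesis unfolding sigmaX_def LL_def[symmetric] using i LL_len
    by (simp add: nth_rotate1)
qed

lemma sigma_val: "x \<in> {1..n} \<Longrightarrow> sigmaX n x = pi2 n (pi1 n x)"
proof -
  assume x: "x \<in> {1..n}"
  define m where "m = (n+1) div 2"
  define e where "e = n div 2"
  have ne: "n = m + e" "m = e \<or> m = e + 1" unfolding m_def e_def by presburger+
  have nth: "\<And>i. i < n \<Longrightarrow> LL n ! i = (if i < m then 2*i+1 else 2*(e - (i - m)))"
    using LL_nth unfolding m_def e_def by simp
  show ?thesis
  proof (cases "odd x")
    case True
    then obtain j where xj: "x = 2*j+1" by (metis oddE)
    have jn: "j < n" "j < m" using x xj ne by auto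
    have L: "LL n ! j = x" using nth[OF jn(1)] jn xj by simp
    have s: "sigmaX n x = LL n ! (Suc j mod n)" using sigma_nth[OF jn(1)] L by simp
    consider "2*j+3 \<le> n" | "2*j+2 = n" | "2*j+1 = n" using x xj by fastforce
    then show ?thesis
    proof cases
      case 1
      then have "Suc j < n" "Suc j < m" using ne by auto
      then show ?thesis using s nth[of "Suc j"] 1 xj by (simp add: pi1_def pi2_def)
    next
      case 2
      then have "Suc j < n" "Suc j = m" "e = m" using ne by presburger+
      moreover have "even n" using 2 by (metis even_add even_mult_iff even_numeral)
      ultimately show ?thesis using s nth[of "Suc j"] 2 xj by (simp add: pi1_def pi2_def)
    next
      case 3
      then have "Suc j = m" "e = j" using ne by auto
      show ?thesis
      proof (cases "j = 0")
        case True
        then show ?thesis using s 3 xj nth[of 0] \<open>Suc j = m\<close> by (simp add: pi1_def pi2_def)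
      next
        case False
        then have "Suc j < n" using ne \<open>Suc j = m\<close> \<open>e = j\<close> by simp
        moreover have "odd n" using 3 by presburger
        ultimately show ?thesis using s nth[of "Suc j"] 3 xj \<open>Suc j = m\<close> \<open>e = j\<close> False
          by (simp add: pi1_def pi2_def)
      qed
    qed
  next
    case False
    then obtain j where xj: "x = 2*j" by (metis evenE)
    have j: "1 \<le> j" "j \<le> e" using x xj ne unfolding e_def by auto
    define i where "i = m + (e - j)"
    have "i < n" using j ne unfolding i_def by simp
    have "\<not> i < m" unfolding i_def by simp
    then have L: "LL n ! i = x" using nth[OF \<open>i < n\<close>] xj j unfolding i_def by simp
    have s: "sigmaX n x = LL n ! (Suc i mod n)" using sigma_nth[OF \<open>i < n\<close>] L by simp
    show ?thesis
    proof (cases "j = 1")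
      case True
      then have "Suc i = n" using ne j unfolding i_def by simp
      then have "Suc i mod n = 0" by simp
      moreover have "0 < n" using \<open>i < n\<close> by simp
      moreover have "0 < m" "2 \<le> n" using ne j x xj by auto
      ultimately show ?thesis using s nth[of 0] xj True ne by (simp add: pi1_def pi2_def)
    next
      case False
      then have "Suc i < n" "\<not> Suc i < m" using ne j unfolding i_def by auto
      then have "LL n ! (Suc i mod n) = 2 * j - 2" using nth[of "Suc i"] j unfolding i_def by simp
      moreover have "pi1 n x = 2*j - 1" using xj j x False unfolding pi1_def by auto
      moreover have "pi2 n (2*j - 1) = 2*j - 2" using j x xj False unfolding pi2_def by auto
      ultimately show ?thesis using s by simp
    qed
  qed
qed

lemma sigma_eq: "sigmaX n = pi2 n \<circ> pi1 n"
proof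
  fix x
  show "sigmaX n x = (pi2 n \<circ> pi1 n) x"
  proof (cases "x \<in> {1..n}")
    case True then show ?thesis using sigma_val by simp
  next
    case False
    have "set (LL n) = {1..n}" unfolding LL_def by auto
    then have "sigmaX n permutes {1..n}" unfolding sigmaX_def LL_def[symmetric]
      using cycle_permutes by metis
    then show ?thesis using False by (simp add: permutes_not_in pi1_out pi2_out)
  qed
qed

lemma sigma_inv: "inv (sigmaX n) = pi1 n \<circ> pi2 n"
  unfolding sigma_eq by (rule inv_unique_comp) (auto simp: fun_eq_iff)



lemma match_two:
  assumes "matching_ordering V E n v" "i \<in> {1..n}" "j \<in> {1..n}" "k \<in> {1..n}" "j \<noteq> k"
    "backedge E v i j \<or> backedge E v j i" "backedge E v i k \<or> backedge E v k i"
  shows False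
proof -
  let ?S = "{j\<in>{1..n}. backedge E v i j \<or> backedge E v j i}"
  have "{j,k} \<subseteq> ?S" using assms by auto
  hence "card {j,k} \<le> card ?S" by (intro card_mono) auto
  moreover have "card ?S \<le> 1" using assms(1,2) unfolding matching_ordering_def by blast
  ultimately show False using assms(5) by simp
qed

lemma core:
  fixes P Q :: "nat \<Rightarrow> nat"
  assumes T: "tournament V E"
    and Mv: "matching_ordering V E n v"
    and MB: "matching_ordering V E n B"
    and Bdef: "\<And>k. k \<in> {1..n} \<Longrightarrow> B (Q k) = v (P k)"
    and Pin: "\<And>k. k \<in> {1..n} \<Longrightarrow> P k \<in> {1..n}"
    and Qin: "\<And>k. k \<in> {1..n} \<Longrightarrow> Q k \<in> {1..n}"
    and Pinj: "inj_on P {1..n}" and Qinj: "inj_on Q {1..n}"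
    and Pmono: "\<And>k l. 1 \<le> k \<Longrightarrow> l \<le> n \<Longrightarrow> k+2 \<le> l \<Longrightarrow> P k < P l"
    and Qmono: "\<And>k l. 1 \<le> k \<Longrightarrow> l \<le> n \<Longrightarrow> k+2 \<le> l \<Longrightarrow> Q k < Q l"
    and Padj: "\<And>k. 1 \<le> k \<Longrightarrow> k+1 \<le> n \<Longrightarrow> (P k < P (k+1) \<longleftrightarrow> (odd k \<longleftrightarrow> s))"
    and Qadj: "\<And>k. 1 \<le> k \<Longrightarrow> k+1 \<le> n \<Longrightarrow> (Q k < Q (k+1) \<longleftrightarrow> \<not>(odd k \<longleftrightarrow> s))"
  shows "(\<forall>k l. 1 \<le> k \<longrightarrow> l \<le> n \<longrightarrow> k+2 \<le> l \<longrightarrow> E (v (P k)) (v (P l))) \<and>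
         ((\<forall>k. 1 \<le> k \<longrightarrow> k+1 \<le> n \<longrightarrow> E (v (P k)) (v (P (k+1)))) \<or>
          (\<forall>k. 1 \<le> k \<longrightarrow> k+1 \<le> n \<longrightarrow> E (v (P (k+1))) (v (P k))))"
proof -
  define u where "u k = v (P k)" for k
  have vbij: "bij_betw v {1..n} V" using Mv unfolding matching_ordering_def is_ordering_def by simp
  have uV: "u k \<in> V" if "k \<in> {1..n}" for k
    using that Pin vbij unfolding u_def bij_betw_def by auto
  have udist: "u k \<noteq> u l" if "k \<in> {1..n}" "l \<in> {1..n}" "k \<noteq> l" for k l
  proof
    assume "u k = u l"
    then have "P k = P l" using vbij Pin that unfolding u_def bij_betw_def inj_on_def by blast
    then show False using Pinj that unfolding inj_on_def by blast
  qed
  have tour: "E (u k) (u l) \<longleftrightarrow> \<not> E (u l) (u k)" if "k \<in> {1..n}" "l \<in> {1..n}" "k \<noteq> l" for k l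
    using T uV udist that unfolding tournament_def by blast
  define vb where "vb k l \<longleftrightarrow> (P k < P l \<and> E (u l) (u k)) \<or> (P l < P k \<and> E (u k) (u l))" for k l
  define bb where "bb k l \<longleftrightarrow> (Q k < Q l \<and> E (u l) (u k)) \<or> (Q l < Q k \<and> E (u k) (u l))" for k l
  have vbsym: "vb k l = vb l k" for k l unfolding vb_def by auto
  have Mv': False if "k \<in> {1..n}" "l1 \<in> {1..n}" "l2 \<in> {1..n}" "l1 \<noteq> l2" "vb k l1" "vb k l2" for k l1 l2
  proof (rule match_two[OF Mv Pin[OF that(1)] Pin[OF that(2)] Pin[OF that(3)]])
    show "P l1 \<noteq> P l2" using Pinj that unfolding inj_on_def by blast
    show "backedge E v (P k) (P l1) \<or> backedge E v (P l1) (P k)"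
      using that(5) unfolding vb_def backedge_def u_def by auto
    show "backedge E v (P k) (P l2) \<or> backedge E v (P l2) (P k)"
      using that(6) unfolding vb_def backedge_def u_def by auto
  qed
  have MB': False if "k \<in> {1..n}" "l1 \<in> {1..n}" "l2 \<in> {1..n}" "l1 \<noteq> l2" "bb k l1" "bb k l2" for k l1 l2
  proof (rule match_two[OF MB Qin[OF that(1)] Qin[OF that(2)] Qin[OF that(3)]])
    show "Q l1 \<noteq> Q l2" using Qinj that unfolding inj_on_def by blast
    show "backedge E B (Q k) (Q l1) \<or> backedge E B (Q l1) (Q k)"
      using that(5) Bdef that unfolding bb_def backedge_def u_def by auto
    show "backedge E B (Q k) (Q l2) \<or> backedge E B (Q l2) (Q k)"
      using that(6) Bdef that unfolding bb_def backedge_def u_def by auto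
  qed
  have Pne: "P k \<noteq> P l" if "k \<in> {1..n}" "l \<in> {1..n}" "k \<noteq> l" for k l
    using Pinj that unfolding inj_on_def by blast
  have Qne: "Q k \<noteq> Q l" if "k \<in> {1..n}" "l \<in> {1..n}" "k \<noteq> l" for k l
    using Qinj that unfolding inj_on_def by blast
  have step1: "vb k (k+1) \<longleftrightarrow> \<not> bb k (k+1)" if "1 \<le> k" "k+1 \<le> n" for k
  proof -
    have k: "k \<in> {1..n}" "k+1 \<in> {1..n}" "k \<noteq> k+1" using that by auto
    have "P k < P (k+1) \<longleftrightarrow> \<not> Q k < Q (k+1)" using Padj[OF that] Qadj[OF that] by blast
    then show ?thesis using Pne[OF k] Qne[OF k] tour[OF k] unfolding vb_def bb_def by auto
  qed
  have step2: "E (u k) (u l)" if "1 \<le> k" "l \<le> n" "k+2 \<le> l" for k l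
  proof (rule ccontr)
    assume nE: "\<not> E (u k) (u l)"
    have k: "k \<in> {1..n}" "l \<in> {1..n}" "k+1 \<in> {1..n}" using that by auto
    have "E (u l) (u k)" using nE tour[OF k(1,2)] that by auto
    then have "vb k l" "bb k l" using Pmono[OF that] Qmono[OF that] unfolding vb_def bb_def by auto
    moreover have "vb k (k+1) \<or> bb k (k+1)" using step1[of k] that by auto
    ultimately show False using Mv'[OF k(1,2,3)] MB'[OF k(1,2,3)] that by auto
  qed
  have step3: "vb k (k+1) \<longleftrightarrow> \<not> vb (k+1) (k+2)" if "1 \<le> k" "k+2 \<le> n" for k
  proof -
    have k: "k+1 \<in> {1..n}" "k \<in> {1..n}" "k+2 \<in> {1..n}" using that by auto
    have a: "vb k (k+1) \<longleftrightarrow> \<not> bb k (k+1)" using step1[of k] that by auto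
    have b: "vb (k+1) (k+2) \<longleftrightarrow> \<not> bb (k+1) (k+2)" using step1[of "k+1"] that by auto
    have bbsym: "bb k l = bb l k" for k l unfolding bb_def by auto
    show ?thesis using Mv'[OF k] MB'[OF k] a b vbsym[of k "k+1"] bbsym[of k "k+1"] by auto
  qed
  have step4: "\<forall>k. 1 \<le> k \<longrightarrow> k+1 \<le> n \<longrightarrow> (vb k (k+1) \<longleftrightarrow> (vb 1 2 \<longleftrightarrow> odd k))" 
  proof
    fix k show "1 \<le> k \<longrightarrow> k+1 \<le> n \<longrightarrow> (vb k (k+1) \<longleftrightarrow> (vb 1 2 \<longleftrightarrow> odd k))"
    proof (induction k)
      case (Suc k)
      show ?case
      proof (cases "k = 0")
        case True then show ?thesis by (simp add: numeral_2_eq_2)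
      next
        case False
        show ?thesis
        proof (intro impI)
          assume "1 \<le> Suc k" "Suc k + 1 \<le> n"
          then have "vb k (k+1) \<longleftrightarrow> (vb 1 2 \<longleftrightarrow> odd k)" using Suc.IH False by auto
          moreover have "vb k (k+1) \<longleftrightarrow> \<not> vb (k+1) (k+2)" using step3[of k] False \<open>Suc k + 1 \<le> n\<close> by auto
          ultimately show "vb (Suc k) (Suc k + 1) \<longleftrightarrow> (vb 1 2 \<longleftrightarrow> odd (Suc k))" by auto
        qed
      qed
    qed simp
  qed
  have step5: "E (u (k+1)) (u k) \<longleftrightarrow> (vb 1 2 \<longleftrightarrow> s)" if "1 \<le> k" "k+1 \<le> n" for k
  proof -
    have k: "k \<in> {1..n}" "k+1 \<in> {1..n}" "k \<noteq> k+1" using that by auto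
    have "E (u (k+1)) (u k) \<longleftrightarrow> (vb k (k+1) \<longleftrightarrow> P k < P (k+1))"
      using Pne[OF k] tour[OF k] unfolding vb_def by auto
    then show ?thesis using step4 Padj[OF that] that by auto
  qed
  show ?thesis
  proof (intro conjI)
    show "\<forall>k l. 1 \<le> k \<longrightarrow> l \<le> n \<longrightarrow> k+2 \<le> l \<longrightarrow> E (v (P k)) (v (P l))"
      using step2 unfolding u_def by blast
    show "(\<forall>k. 1 \<le> k \<longrightarrow> k+1 \<le> n \<longrightarrow> E (v (P k)) (v (P (k+1)))) \<or>
          (\<forall>k. 1 \<le> k \<longrightarrow> k+1 \<le> n \<longrightarrow> E (v (P (k+1))) (v (P k)))"
    proof (cases "vb 1 2 \<longleftrightarrow> s")
      case True then show ?thesis using step5 unfolding u_def by blast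
    next
      case False
      have "E (u k) (u (k+1))" if "1 \<le> k" "k+1 \<le> n" for k
        using step5[OF that] False tour[of k "k+1"] that by auto
      then show ?thesis unfolding u_def by blast
    qed
  qed
qed



lemma pi_facts:
  "1 \<le> k \<Longrightarrow> k \<le> n \<Longrightarrow> 1 \<le> pi1 n k" "1 \<le> k \<Longrightarrow> k \<le> n \<Longrightarrow> pi1 n k \<le> n"
  "1 \<le> k \<Longrightarrow> k \<le> n \<Longrightarrow> 1 \<le> pi2 n k" "1 \<le> k \<Longrightarrow> k \<le> n \<Longrightarrow> pi2 n k \<le> n"
  "1 \<le> k \<Longrightarrow> k + 1 \<le> n \<Longrightarrow> (pi1 n k < pi1 n (k+1)) = even k"
  "1 \<le> k \<Longrightarrow> k + 1 \<le> n \<Longrightarrow> (pi2 n k < pi2 n (k+1)) = odd k"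
  using pi1_range[of k n] pi2_range[of k n] pi1_adj[of k n] pi2_adj[of k n] by auto

lemma ord_comp:
  assumes "is_ordering V n v" "P permutes {1..n}"
  shows "is_ordering V n (v \<circ> P)"
  using assms unfolding is_ordering_def
  by (metis bij_betw_trans permutes_imp_bij)

lemma finish:
  assumes T: "tournament V E" and Mv: "matching_ordering V E n v"
    and Pp: "P permutes {1..n}" and Pinv: "\<And>i. P (P i) = i"
    and C: "(\<forall>k l. 1 \<le> k \<longrightarrow> l \<le> n \<longrightarrow> k+2 \<le> l \<longrightarrow> E (v (P k)) (v (P l))) \<and>
         ((\<forall>k. 1 \<le> k \<longrightarrow> k+1 \<le> n \<longrightarrow> E (v (P k)) (v (P (k+1)))) \<or>
          (\<forall>k. 1 \<le> k \<longrightarrow> k+1 \<le> n \<longrightarrow> E (v (P (k+1))) (v (P k))))"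
  shows "(transitive_tournament V E \<or> iso_Pn V E n) \<and> is_pi_ordering V E n P v"
proof -
  define u where "u = v \<circ> P"
  have ou: "is_ordering V n u" unfolding u_def
    using ord_comp[OF _ Pp] Mv unfolding matching_ordering_def by blast
  have cardV: "card V = n" using Mv unfolding matching_ordering_def is_ordering_def
    by (metis bij_betw_same_card card_atLeastAtMost diff_Suc_1)
  have vu: "\<forall>i\<in>{1..n}. v i = u (P i)" unfolding u_def using Pinv by simp
  show ?thesis
  proof (cases "\<forall>k. 1 \<le> k \<longrightarrow> k+1 \<le> n \<longrightarrow> E (v (P k)) (v (P (k+1)))")
    case True
    have "transitive_ordering V E n u"
      unfolding transitive_ordering_def
    proof (intro conjI ou ballI impI)
      fix i j assume "i \<in> {1..n}" "j \<in> {1..n}" "i < j"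
      then show "E (u i) (u j)" using C True unfolding u_def
        by (cases "j = i + 1") auto
    qed
    then have "transitive_ordering V E n u \<or> Pn_ordering V E n u" by blast
    moreover have "transitive_tournament V E" unfolding transitive_tournament_def
      using T \<open>transitive_ordering V E n u\<close> cardV by auto
    ultimately show ?thesis using vu unfolding is_pi_ordering_def by blast
  next
    case False
    then have F: "\<forall>k. 1 \<le> k \<longrightarrow> k+1 \<le> n \<longrightarrow> E (v (P (k+1))) (v (P k))" using C by blast
    have "Pn_ordering V E n u"
      unfolding Pn_ordering_def
    proof (intro conjI ou ballI impI)
      fix i j assume "i \<in> {1..n}" "j \<in> {1..n}"
      then show "i + 2 \<le> j \<Longrightarrow> E (u i) (u j)" "j = i + 1 \<Longrightarrow> E (u j) (u i)"
        using C F unfolding u_def by auto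
    qed
    then have "transitive_ordering V E n u \<or> Pn_ordering V E n u" by blast
    moreover have "iso_Pn V E n" unfolding iso_Pn_def
      using T \<open>Pn_ordering V E n u\<close> by auto
    ultimately show ?thesis using vu unfolding is_pi_ordering_def by blast
  qed
qed

lemma partA:
  assumes T: "tournament V E" and Mv: "matching_ordering V E n v"
    and MB: "matching_ordering V E n (v \<circ> sigmaX n)"
  shows "(transitive_tournament V E \<or> iso_Pn V E n) \<and> is_pi_ordering V E n (pi2 n) v"
proof (rule finish[OF T Mv pi2_perm pi2_inv])
  show "(\<forall>k l. 1 \<le> k \<longrightarrow> l \<le> n \<longrightarrow> k+2 \<le> l \<longrightarrow> E (v (pi2 n k)) (v (pi2 n l))) \<and>
         ((\<forall>k. 1 \<le> k \<longrightarrow> k+1 \<le> n \<longrightarrow> E (v (pi2 n k)) (v (pi2 n (k+1)))) \<or>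
          (\<forall>k. 1 \<le> k \<longrightarrow> k+1 \<le> n \<longrightarrow> E (v (pi2 n (k+1))) (v (pi2 n k))))"
  proof (rule core[OF T Mv MB, where Q = "pi1 n" and s = True])
    show "inj_on (pi2 n) {1..n}" "inj_on (pi1 n) {1..n}"
      by (metis inj_on_inverseI pi2_inv) (metis inj_on_inverseI pi1_inv)
  qed (simp_all add: sigma_eq pi_facts[simplified] pi1_mono pi2_mono)
qed

lemma partB:
  assumes T: "tournament V E" and Mv: "matching_ordering V E n v"
    and MB: "matching_ordering V E n (v \<circ> inv (sigmaX n))"
  shows "(transitive_tournament V E \<or> iso_Pn V E n) \<and> is_pi_ordering V E n (pi1 n) v"
proof (rule finish[OF T Mv pi1_perm pi1_inv])
  show "(\<forall>k l. 1 \<le> k \<longrightarrow> l \<le> n \<longrightarrow> k+2 \<le> l \<longrightarrow> E (v (pi1 n k)) (v (pi1 n l))) \<and>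
         ((\<forall>k. 1 \<le> k \<longrightarrow> k+1 \<le> n \<longrightarrow> E (v (pi1 n k)) (v (pi1 n (k+1)))) \<or>
          (\<forall>k. 1 \<le> k \<longrightarrow> k+1 \<le> n \<longrightarrow> E (v (pi1 n (k+1))) (v (pi1 n k))))"
  proof (rule core[OF T Mv MB, where Q = "pi2 n" and s = False])
    show "inj_on (pi2 n) {1..n}" "inj_on (pi1 n) {1..n}"
      by (metis inj_on_inverseI pi2_inv) (metis inj_on_inverseI pi1_inv)
  qed (simp_all add: sigma_inv pi_facts[simplified] pi1_mono pi2_mono)
qed



lemma tau_vals: "tauX 1 = 3" "tauX 2 = 4" "tauX 3 = 1" "tauX 4 = 2"
  by (simp_all add: tauX_def transpose_def)

lemma pi_vals: "pi2 4 1 = 1" "pi2 4 2 = 3" "pi2 4 3 = 2" "pi2 4 4 = 4"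
  "pi1 4 1 = 2" "pi1 4 2 = 1" "pi1 4 3 = 4" "pi1 4 4 = 3"
  by (simp_all add: pi1_def pi2_def)

lemma pi_vals2: "pi2 4 (Suc 0) = 1" "pi2 4 (Suc (Suc 0)) = 3" "pi1 4 (Suc 0) = 2" "pi1 4 (Suc (Suc 0)) = 1"
  "pi2 4 (Suc (Suc (Suc 0))) = 2" "pi1 4 (Suc (Suc (Suc 0))) = 4"
  by (simp_all add: pi1_def pi2_def)

lemma four: "{1..4::nat} = {1,2,3,4}" by auto

lemma partC:
  assumes T: "tournament V E" and Mv: "matching_ordering V E 4 v"
    and MB: "matching_ordering V E 4 (v \<circ> tauX)"
  shows "iso_Pn V E 4 \<and> (is_pi_ordering V E 4 (pi2 4) v \<or> is_pi2pi1_P4_ordering V E v)"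
proof -
  have vbij: "bij_betw v {1..4} V" using Mv unfolding matching_ordering_def is_ordering_def by simp
  have tour: "E (v i) (v j) \<longleftrightarrow> \<not> E (v j) (v i)" if "i \<in> {1..4}" "j \<in> {1..4}" "i \<noteq> j" for i j
  proof -
    have "v i \<in> V" "v j \<in> V" "v i \<noteq> v j" using vbij that unfolding bij_betw_def inj_on_def by auto
    then show ?thesis using T unfolding tournament_def by blast
  qed
  have t: "E (v 2) (v 1) \<longleftrightarrow> \<not> E (v 1) (v 2)" "E (v 3) (v 1) \<longleftrightarrow> \<not> E (v 1) (v 3)"
    "E (v 4) (v 1) \<longleftrightarrow> \<not> E (v 1) (v 4)" "E (v 3) (v 2) \<longleftrightarrow> \<not> E (v 2) (v 3)"
    "E (v 4) (v 2) \<longleftrightarrow> \<not> E (v 2) (v 4)" "E (v 4) (v 3) \<longleftrightarrow> \<not> E (v 3) (v 4)"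
    by (rule tour; simp)+
  have mv1: "\<not> (E (v 2) (v 1) \<and> E (v 3) (v 1))" using match_two[OF Mv, of 1 2 3] by (auto simp: backedge_def)
  have mw1: "\<not> (E (v 4) (v 3) \<and> E (v 1) (v 3))" using match_two[OF MB, of 1 2 3] by (auto simp: backedge_def tau_vals tau_vals[simplified])
  have mv2: "\<not> (E (v 2) (v 1) \<and> E (v 4) (v 1))" using match_two[OF Mv, of 1 2 4] by (auto simp: backedge_def)
  have mw2: "\<not> (E (v 4) (v 3) \<and> E (v 2) (v 3))" using match_two[OF MB, of 1 2 4] by (auto simp: backedge_def tau_vals tau_vals[simplified])
  have mv3: "\<not> (E (v 3) (v 1) \<and> E (v 4) (v 1))" using match_two[OF Mv, of 1 3 4] by (auto simp: backedge_def)
  have mw3: "\<not> (E (v 1) (v 3) \<and> E (v 2) (v 3))" using match_two[OF MB, of 1 3 4] by (auto simp: backedge_def tau_vals tau_vals[simplified])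
  have mv4: "\<not> (E (v 2) (v 1) \<and> E (v 3) (v 2))" using match_two[OF Mv, of 2 1 3] by (auto simp: backedge_def)
  have mw4: "\<not> (E (v 4) (v 3) \<and> E (v 1) (v 4))" using match_two[OF MB, of 2 1 3] by (auto simp: backedge_def tau_vals tau_vals[simplified])
  have mv5: "\<not> (E (v 2) (v 1) \<and> E (v 4) (v 2))" using match_two[OF Mv, of 2 1 4] by (auto simp: backedge_def)
  have mw5: "\<not> (E (v 4) (v 3) \<and> E (v 2) (v 4))" using match_two[OF MB, of 2 1 4] by (auto simp: backedge_def tau_vals tau_vals[simplified])
  have mv6: "\<not> (E (v 3) (v 2) \<and> E (v 4) (v 2))" using match_two[OF Mv, of 2 3 4] by (auto simp: backedge_def)
  have mw6: "\<not> (E (v 1) (v 4) \<and> E (v 2) (v 4))" using match_two[OF MB, of 2 3 4] by (auto simp: backedge_def tau_vals tau_vals[simplified])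
  have mv7: "\<not> (E (v 3) (v 1) \<and> E (v 3) (v 2))" using match_two[OF Mv, of 3 1 2] by (auto simp: backedge_def)
  have mw7: "\<not> (E (v 1) (v 3) \<and> E (v 1) (v 4))" using match_two[OF MB, of 3 1 2] by (auto simp: backedge_def tau_vals tau_vals[simplified])
  have mv8: "\<not> (E (v 3) (v 1) \<and> E (v 4) (v 3))" using match_two[OF Mv, of 3 1 4] by (auto simp: backedge_def)
  have mw8: "\<not> (E (v 1) (v 3) \<and> E (v 2) (v 1))" using match_two[OF MB, of 3 1 4] by (auto simp: backedge_def tau_vals tau_vals[simplified])
  have mv9: "\<not> (E (v 3) (v 2) \<and> E (v 4) (v 3))" using match_two[OF Mv, of 3 2 4] by (auto simp: backedge_def)
  have mw9: "\<not> (E (v 1) (v 4) \<and> E (v 2) (v 1))" using match_two[OF MB, of 3 2 4] by (auto simp: backedge_def tau_vals tau_vals[simplified])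
  have mv10: "\<not> (E (v 4) (v 1) \<and> E (v 4) (v 2))" using match_two[OF Mv, of 4 1 2] by (auto simp: backedge_def)
  have mw10: "\<not> (E (v 2) (v 3) \<and> E (v 2) (v 4))" using match_two[OF MB, of 4 1 2] by (auto simp: backedge_def tau_vals tau_vals[simplified])
  have mv11: "\<not> (E (v 4) (v 1) \<and> E (v 4) (v 3))" using match_two[OF Mv, of 4 1 3] by (auto simp: backedge_def)
  have mw11: "\<not> (E (v 2) (v 3) \<and> E (v 2) (v 1))" using match_two[OF MB, of 4 1 3] by (auto simp: backedge_def tau_vals tau_vals[simplified])
  have mv12: "\<not> (E (v 4) (v 2) \<and> E (v 4) (v 3))" using match_two[OF Mv, of 4 2 3] by (auto simp: backedge_def)
  have mw12: "\<not> (E (v 2) (v 4) \<and> E (v 2) (v 1))" using match_two[OF MB, of 4 2 3] by (auto simp: backedge_def tau_vals tau_vals[simplified])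
  note M = mv1 mw1 mv2 mw2 mv3 mw3 mv4 mw4 mv5 mw5 mv6 mw6 mv7 mw7 mv8 mw8 mv9 mw9 mv10 mw10 mv11 mw11 mv12 mw12
  have F12: "E (v 1) (v 2)" using mv1 mw8 t(1,2) by blast
  have F34: "E (v 3) (v 4)" using mv8 mw1 t(2,6) by blast
  show ?thesis
  proof (cases "E (v 3) (v 1)")
    case True
    define u where "u = v \<circ> pi2 4"
    have P: "Pn_ordering V E 4 u" unfolding Pn_ordering_def
    proof
      show "is_ordering V 4 u" unfolding u_def using ord_comp[OF _ pi2_perm] Mv
        unfolding matching_ordering_def by blast
      have "E (v 2) (v 3)" "E (v 4) (v 2)" "E (v 1) (v 4)" using mv7 mv3 mw6 True t by blast+
      then show "\<forall>i\<in>{1..4}. \<forall>j\<in>{1..4}. (i + 2 \<le> j \<longrightarrow> E (u i) (u j)) \<and> (j = i + 1 \<longrightarrow> E (u j) (u i))"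
        unfolding four u_def using True F12 F34 by (simp add: pi_vals pi_vals2)
    qed
    then have "is_pi_ordering V E 4 (pi2 4) v" unfolding is_pi_ordering_def u_def by auto
    then show ?thesis using P T unfolding iso_Pn_def by blast
  next
    case False
    define u where "u = v \<circ> (pi2 4 \<circ> pi1 4)"
    have P: "Pn_ordering V E 4 u" unfolding Pn_ordering_def
    proof
      show "is_ordering V 4 u" unfolding u_def using ord_comp[OF _ permutes_compose[OF pi1_perm pi2_perm]] Mv
        unfolding matching_ordering_def by blast
      have "E (v 1) (v 3)" using t False by blast
      then have "E (v 3) (v 2)" "E (v 2) (v 4)" "E (v 4) (v 1)" using mw3 mw7 mv10 t by blast+
      then show "\<forall>i\<in>{1..4}. \<forall>j\<in>{1..4}. (i + 2 \<le> j \<longrightarrow> E (u i) (u j)) \<and> (j = i + 1 \<longrightarrow> E (u j) (u i))"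
        unfolding four u_def using \<open>E (v 1) (v 3)\<close> F12 F34 by (simp add: pi_vals pi_vals2)
    qed
    then have "is_pi2pi1_P4_ordering V E v" unfolding is_pi2pi1_P4_ordering_def u_def
      by (auto simp: pi_vals pi_vals2)
    then show ?thesis using P T unfolding iso_Pn_def by blast
  qed
qed

theorem proposition5p3:
  fixes V :: "'a set" and E :: "'a \<Rightarrow> 'a \<Rightarrow> bool" and n :: nat
    and v :: "nat \<Rightarrow> 'a" and \<sigma> :: "nat \<Rightarrow> nat"
  assumes "tournament V E"
    and "matching_ordering V E n v"
    and "\<sigma> permutes {1..n}"
    and "matching_ordering V E n (v \<circ> \<sigma>)"
  shows "(\<sigma> = sigmaX n \<longrightarrow>
            (transitive_tournament V E \<or> iso_Pn V E n) \<and> is_pi_ordering V E n (pi2 n) v)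
       \<and> (\<sigma> = inv (sigmaX n) \<longrightarrow>
            (transitive_tournament V E \<or> iso_Pn V E n) \<and> is_pi_ordering V E n (pi1 n) v)
       \<and> (n = 4 \<and> \<sigma> = tauX \<longrightarrow>
            iso_Pn V E 4 \<and> (is_pi_ordering V E 4 (pi2 4) v \<or> is_pi2pi1_P4_ordering V E v))"
proof -
  have A: "\<sigma> = sigmaX n \<longrightarrow> (transitive_tournament V E \<or> iso_Pn V E n) \<and> is_pi_ordering V E n (pi2 n) v"
  proof
    assume "\<sigma> = sigmaX n"
    then show "(transitive_tournament V E \<or> iso_Pn V E n) \<and> is_pi_ordering V E n (pi2 n) v"
      using partA[OF assms(1,2)] assms(4) by simp
  qed
  have B: "\<sigma> = inv (sigmaX n) \<longrightarrow> (transitive_tournament V E \<or> iso_Pn V E n) \<and> is_pi_ordering V E n (pi1 n) v"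
  proof
    assume "\<sigma> = inv (sigmaX n)"
    then show "(transitive_tournament V E \<or> iso_Pn V E n) \<and> is_pi_ordering V E n (pi1 n) v"
      using partB[OF assms(1,2)] assms(4) by simp
  qed
  have C: "n = 4 \<and> \<sigma> = tauX \<longrightarrow> iso_Pn V E 4 \<and> (is_pi_ordering V E 4 (pi2 4) v \<or> is_pi2pi1_P4_ordering V E v)"
  proof
    assume h: "n = 4 \<and> \<sigma> = tauX"
    then have "matching_ordering V E 4 v" "matching_ordering V E 4 (v \<circ> tauX)"
      using assms(2,4) by auto
    then show "iso_Pn V E 4 \<and> (is_pi_ordering V E 4 (pi2 4) v \<or> is_pi2pi1_P4_ordering V E v)"
      using partC[OF assms(1)] by blast
  qed
  from A B C show ?thesis by (intro conjI)
qed

end
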